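(* Let $0<\alpha<1$. Then $$\|\mathcal{C}\|_{H^\infty_{\alpha,\log}\to H^\infty_\alpha}=\sup_{0\le r<1}\int_0^\infty\frac{(1+r)^\alpha e^{-t}\big(1-(1-e^{-t})r\big)^{2\alpha-1}}{\big(1-(1-2e^{-t})r\big)^\alpha\log\dfrac{2e^{1/\alpha}}{1-\left(\frac{re^{-t}}{1-(1-e^{-t})r}\right)^2}}\,dt,$$ and $$\|\mathcal{C}\|_{H^\infty_{\alpha,\log}\to H^\infty_\alpha}\ge\frac{1}{\frac1\alpha+\log 2}.$$
   Context: $\mathbb{D}$ is the open unit disc and $H(\mathbb{D})$ the space of analytic functions on $\mathbb{D}$. For $f(z)=\sum_{k\ge0}a_kz^k\in H(\mathbb{D})$ the Ces\`aro operator is $\mathcal{C}(f)(z)=\sum_{n\ge0}\Big(\frac{1}{n+1}\sum_{k=0}^n a_k\Big)z^n=\int_0^1\frac{f(tz)}{1-tz}\,dt$. For $0<\alpha<1$: the Korenblum space $H^\infty_\alpha$ consists of $f\in H(\mathbb{D})$ with $\|f\|_{H^\infty_\alpha}=\sup_{z\in\mathbb{D}}(1-|z|^2)^\alpha|f(z)|<\infty$; the logarithmically weighted Korenblum space $H^\infty_{\alpha,\log}$ consists of $f\in H(\mathbb{D})$ with $\|f\|_{H^\infty_{\alpha,\log}}=\sup_{z\in\mathbb{D}}(1-|z|^2)^\alpha\log\frac{2e^{1/\alpha}}{1-|z|^2}\,|f(z)|<\infty$. Operator norms are $\|\mathcal{C}\|_{X\to Y}=\sup\{\|\mathcal{C}f\|_Y:\|f\|_X\le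 1\}$. *)

theory Defs
  imports "HOL-Analysis.Analysis"
begin

definition unit_disc :: "complex set" where
  "unit_disc = ball 0 1"

text \<open>Cesaro operator, via the integral representation
  C(f)(z) = integral over [0,1] of f(tz)/(1-tz) dt.\<close>
definition cesaro :: "(complex \<Rightarrow> complex) \<Rightarrow> complex \<Rightarrow> complex" where
  "cesaro f z = integral {0..1} (\<lambda>t::real. f (of_real t * z) / (1 - of_real t * z))"

definition korenblum_norm :: "real \<Rightarrow> (complex \<Rightarrow> complex) \<Rightarrow> ereal" where
  "korenblum_norm \<alpha> f =
     (SUP z\<in>unit_disc. ereal ((1 - (cmod z)\<^sup>2) powr \<alpha> * cmod (f z)))"

definition korenblum_log_norm :: "real \<Rightarrow> (complex \<Rightarrow> complex) \<Rightarrow> ereal" where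
  "korenblum_log_norm \<alpha> f =
     (SUP z\<in>unit_disc. ereal ((1 - (cmod z)\<^sup>2) powr \<alpha>
        * ln (2 * exp (1/\<alpha>) / (1 - (cmod z)\<^sup>2)) * cmod (f z)))"

definition cesaro_norm_log_to_korenblum :: "real \<Rightarrow> ereal" where
  "cesaro_norm_log_to_korenblum \<alpha> =
     (SUP f\<in>{f. f holomorphic_on unit_disc \<and> korenblum_log_norm \<alpha> f \<le> 1}.
        korenblum_norm \<alpha> (cesaro f))"

definition cesaro_kernel :: "real \<Rightarrow> real \<Rightarrow> real \<Rightarrow> real" where
  "cesaro_kernel \<alpha> r t =
     (1 + r) powr \<alpha> * exp (-t) * (1 - (1 - exp (-t)) * r) powr (2*\<alpha> - 1)
     / ((1 - (1 - 2 * exp (-t)) * r) powr \<alpha>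
        * ln (2 * exp (1/\<alpha>) / (1 - (r * exp (-t) / (1 - (1 - exp (-t)) * r))\<^sup>2)))"

end

theory Submission
  imports Defs
begin

lemma kernel_subst_identity:
  fixes \<alpha> r s :: real
  assumes a: "0 < \<alpha>" and r: "0 \<le> r" "r < 1" and s: "0 < s" "s < 1"
  defines "t \<equiv> -(ln s + ln (1 - r) - ln (1 - s * r))"
  shows "cesaro_kernel \<alpha> r t * (1 / s + r / (1 - s * r)) =
     (1 - r\<^sup>2) powr \<alpha> / ((1 - (s * r)\<^sup>2) powr \<alpha> * ln (2 * exp (1/\<alpha>) / (1 - (s * r)\<^sup>2)) * (1 - s * r))"
proof -
  define P where "P = 1 - r"
  define Q where "Q = 1 - s * r"
  define R where "R = 1 + s * r"
  have "s * r \<le> r" using r s by (simp add: mult_left_le_one_le)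
  then have sr: "0 \<le> s * r" "s * r < 1" using r s by auto
  have P: "P > 0" using r by (simp add: P_def)
  have Q: "Q > 0" using sr by (simp add: Q_def)
  have R: "R > 0" using sr by (simp add: R_def)
  have ex: "exp (-t) = s * P / Q"
    using s r P Q by (simp add: t_def exp_add exp_diff P_def Q_def)
  have D: "1 - (1 - s * P / Q) * r = P / Q"
    using Q by (simp add: P_def Q_def field_simps)
  have E: "1 - (1 - 2 * (s * P / Q)) * r = P * R / Q"
    using Q by (simp add: P_def Q_def R_def field_simps)
  have F: "r * (s * P / Q) / (P / Q) = s * r" using P Q by (simp add: field_simps)
  have G: "1 - (s * r)\<^sup>2 = Q * R" by (simp add: Q_def R_def power2_eq_square algebra_simps)
  have H: "1 - r\<^sup>2 = (1 + r) * P" by (simp add: P_def power2_eq_square algebra_simps)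
  define L where "L = ln (2 * exp (1/\<alpha>) / (1 - (s * r)\<^sup>2))"
  have "L > 0"
  proof -
    have "Q * R \<le> 1" using sr by (simp add: Q_def R_def algebra_simps power2_eq_square) (metis mult_nonneg_nonneg mult.assoc mult.commute)
    then have "2 * exp (1/\<alpha>) / (Q * R) \<ge> 2 * exp (1/\<alpha>)" using Q R
      by (simp add: field_simps)
    moreover have "2 * exp (1/\<alpha>) > 1" proof -
      have "exp (1/\<alpha>) > 1" using a by simp
      then show ?thesis by linarith
    qed
    ultimately show ?thesis unfolding L_def G by simp
  qed
  have pw: "(P / Q) powr (2 * \<alpha> - 1) = (P powr \<alpha> / Q powr \<alpha>) * (P powr \<alpha> / Q powr \<alpha>) * (Q / P)"
  proof -
    have "(P / Q) powr (2 * \<alpha> - 1) = (P / Q) powr (\<alpha> + \<alpha>) / (P / Q) powr 1"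
      by (simp only: powr_diff mult_2)
    also have "\<dots> = (P powr \<alpha> / Q powr \<alpha>) * (P powr \<alpha> / Q powr \<alpha>) * (Q / P)"
      using P Q by (simp add: powr_divide flip: powr_add)
    finally show ?thesis .
  qed
  have pw2: "(P * R / Q) powr \<alpha> = P powr \<alpha> * R powr \<alpha> / Q powr \<alpha>"
    using P Q R by (simp add: powr_divide powr_mult)
  have pw3: "(Q * R) powr \<alpha> = Q powr \<alpha> * R powr \<alpha>" using Q R by (simp add: powr_mult)
  have pw4: "((1 + r) * P) powr \<alpha> = (1 + r) powr \<alpha> * P powr \<alpha>" using r P by (simp add: powr_mult)
  have pos: "P powr \<alpha> > 0" "Q powr \<alpha> > 0" "R powr \<alpha> > 0" "(1+r) powr \<alpha> > 0"
    using P Q R r by auto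
  have Qs: "1 / s + r / (1 - s * r) = 1 / (s * Q)" using s Q by (simp add: Q_def field_simps)
  have alg: "\<And>ka pa qa ra. ka > 0 \<Longrightarrow> pa > 0 \<Longrightarrow> qa > 0 \<Longrightarrow> ra > 0 \<Longrightarrow>
     ka * (s * P / Q) * ((pa / qa) * (pa / qa) * (Q / P)) / ((pa * ra / qa) * L) * (1 / (s * Q))
     = ka * pa / (qa * ra * L * Q)"
    using P Q s \<open>L > 0\<close> by (simp add: divide_simps)
  have "cesaro_kernel \<alpha> r t = (1 + r) powr \<alpha> * (s * P / Q) * ((P powr \<alpha> / Q powr \<alpha>) * (P powr \<alpha> / Q powr \<alpha>) * (Q / P))
      / ((P powr \<alpha> * R powr \<alpha> / Q powr \<alpha>) * L)"
    unfolding cesaro_kernel_def ex D E F L_def pw pw2 ..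
  moreover have "(1 - r\<^sup>2) powr \<alpha> / ((1 - (s * r)\<^sup>2) powr \<alpha> * L * (1 - s * r))
     = (1 + r) powr \<alpha> * P powr \<alpha> / (Q powr \<alpha> * R powr \<alpha> * L * Q)"
    unfolding G H pw3 pw4 Q_def[symmetric] by (simp add: mult.assoc)
  ultimately show ?thesis unfolding Qs L_def[symmetric] using alg[of "(1 + r) powr \<alpha>" "P powr \<alpha>" "Q powr \<alpha>" "R powr \<alpha>"] pos
    by simp
qed

lemma sq_lt1: "0 \<le> (y::real) \<Longrightarrow> y < 1 \<Longrightarrow> y\<^sup>2 < 1"
  using abs_square_less_1[of y] by simp

definition psi :: "real \<Rightarrow> real \<Rightarrow> real \<Rightarrow> real" where
  "psi \<alpha> r s = 1 / ((1 - (s * r)\<^sup>2) powr \<alpha> * ln (2 * exp (1/\<alpha>) / (1 - (s * r)\<^sup>2)) * (1 - s * r))"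

lemma ln_weight_pos:
  assumes "0 < (\<alpha>::real)" "0 \<le> (x::real)" "x < 1"
  shows "ln (2 * exp (1/\<alpha>) / (1 - x)) > 0"
proof -
  have "exp (1/\<alpha>) > 1" using assms by simp
  then have "2 * exp (1/\<alpha>) > 1 - x" using assms by linarith
  then have "2 * exp (1/\<alpha>) / (1 - x) > 1" using assms by (simp add: field_simps)
  then show ?thesis by simp
qed

lemma psi_cont:
  assumes "0 < \<alpha>" "0 \<le> r" "r < 1" "0 \<le> s" "s \<le> 1"
  shows "isCont (\<lambda>s. psi \<alpha> r s) s"
proof -
  have "s * r \<le> r" using assms by (simp add: mult_left_le_one_le)
  then have sr: "0 \<le> s * r" "s * r < 1" using assms by auto
  then have sq: "0 \<le> (s * r)\<^sup>2" "(s * r)\<^sup>2 < 1" using sq_lt1 by auto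
  have "ln (2 * exp (1/\<alpha>) / (1 - (s * r)\<^sup>2)) > 0" using ln_weight_pos[OF assms(1) sq] .
  then show ?thesis unfolding psi_def using sr sq
    by (intro continuous_intros) auto
qed

lemma psi_pos:
  assumes "0 < \<alpha>" "0 \<le> r" "r < 1" "0 \<le> s" "s \<le> 1"
  shows "psi \<alpha> r s > 0"
proof -
  have "s * r \<le> r" using assms by (simp add: mult_left_le_one_le)
  then have sr: "0 \<le> s * r" "s * r < 1" using assms by auto
  then have sq: "0 \<le> (s * r)\<^sup>2" "(s * r)\<^sup>2 < 1" using sq_lt1 by auto
  have "ln (2 * exp (1/\<alpha>) / (1 - (s * r)\<^sup>2)) > 0" using ln_weight_pos[OF assms(1) sq] .
  then show ?thesis unfolding psi_def using sr sq by auto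
qed

lemma kernel_cont:
  assumes "0 < \<alpha>" "0 \<le> r" "r < 1" "0 \<le> t"
  shows "isCont (\<lambda>t. cesaro_kernel \<alpha> r t) t" "cesaro_kernel \<alpha> r t \<ge> 0"
proof -
  define x where "x = exp (-t)"
  have x: "0 < x" "x \<le> 1" using assms by (auto simp: x_def)
  have xr: "0 \<le> x * r" using x assms by simp
  have "(1 - x) * r \<le> r" using x assms by (simp add: mult_left_le_one_le)
  then have D: "1 - (1 - x) * r > 0" using assms by linarith
  have "1 - (1 - 2 * x) * r = (1 - r) + 2 * (x * r)" by (simp add: algebra_simps)
  then have E: "1 - (1 - 2 * x) * r > 0" using xr assms by linarith
  have u: "0 \<le> r * x / (1 - (1 - x) * r)" using D x assms by simp
  have "r * x < 1 - (1 - x) * r" using assms by (simp add: algebra_simps)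
  then have u2: "r * x / (1 - (1 - x) * r) < 1" using D by (simp add: pos_divide_less_eq)
  have sq: "0 \<le> (r * x / (1 - (1 - x) * r))\<^sup>2" "(r * x / (1 - (1 - x) * r))\<^sup>2 < 1"
    using u u2 sq_lt1 by auto
  have L: "ln (2 * exp (1/\<alpha>) / (1 - (r * x / (1 - (1 - x) * r))\<^sup>2)) > 0"
    using ln_weight_pos[OF assms(1) sq] .
  show "isCont (\<lambda>t. cesaro_kernel \<alpha> r t) t"
    unfolding cesaro_kernel_def isCont_def using D E L sq assms
    by (intro tendsto_intros) (simp_all add: x_def[symmetric])
  show "cesaro_kernel \<alpha> r t \<ge> 0"
    unfolding cesaro_kernel_def x_def[symmetric] using D E L x
    by (intro divide_nonneg_nonneg mult_nonneg_nonneg) auto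
qed

lemma psi_integrable:
  assumes a: "0 < \<alpha>" and r: "0 \<le> r" "r < 1"
  shows "set_integrable lborel {0..1} (\<lambda>s. psi \<alpha> r s)"
  by (rule borel_integrable_atLeastAtMost', rule continuous_at_imp_continuous_on)
     (use psi_cont[OF a r] in auto)

lemma kernel_integral:
  assumes a: "0 < \<alpha>" and r: "0 \<le> r" "r < 1"
  shows "(LBINT t:{0..}. cesaro_kernel \<alpha> r t) = (1 - r\<^sup>2) powr \<alpha> * integral {0..1} (\<lambda>s. psi \<alpha> r s)"
proof -
  define g where "g s = ln s + ln (1 - r) - ln (1 - s * r)" for s
  define g' where "g' s = 1/s + r/(1 - s*r)" for s
  define f where "f y = cesaro_kernel \<alpha> r (-y)" for y
  define c where "c = (1 - r\<^sup>2) powr \<alpha>"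
  have sr: "0 \<le> s * r" "s * r < 1" if "0 \<le> s" "s \<le> 1" for s
  proof -
    have "s * r \<le> r" using that r by (simp add: mult_left_le_one_le)
    then show "0 \<le> s * r" "s * r < 1" using that r by auto
  qed
  have fg: "f (g s) * g' s = c * psi \<alpha> r s" if "0 < s" "s < 1" for s
    using kernel_subst_identity[OF a r that] unfolding f_def g_def g'_def psi_def c_def
    by simp
  have gle: "g s \<le> 0" if "0 < s" "s \<le> 1" for s
  proof -
    have q: "1 - s * r > 0" using sr[of s] that by auto
    have "g s = ln (s * (1 - r) / (1 - s * r))"
      unfolding g_def using that r q by (simp add: ln_mult ln_div)
    moreover have "s * (1 - r) / (1 - s * r) \<le> 1"
      using q that by (simp add: pos_divide_le_eq algebra_simps)
    moreover have "s * (1 - r) / (1 - s * r) > 0" using q that r by simp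
    ultimately show ?thesis by simp
  qed
  have deriv: "DERIV g x :> g' x" if "0 < x" "x < 1" for x
  proof -
    have q: "1 - x * r > 0" using sr[of x] that by auto
    show ?thesis unfolding g_def g'_def using that q
      by (auto intro!: derivative_eq_intros simp: field_simps)
  qed
  have contf: "isCont f (g x)" if "0 < x" "x < 1" for x
  proof -
    have "isCont (\<lambda>t. cesaro_kernel \<alpha> r t) (- g x)"
      using kernel_cont(1)[OF a r, of "- g x"] gle[of x] that by simp
    then show ?thesis unfolding f_def
      by (intro isCont_o2[where f=uminus and g="\<lambda>t. cesaro_kernel \<alpha> r t", unfolded o_def])
         (auto intro!: continuous_intros)
  qed
  have contg': "isCont g' x" if "0 < x" "x < 1" for x
  proof -
    have q: "1 - x * r > 0" using sr[of x] that by auto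
    show ?thesis unfolding g'_def using that q by (intro continuous_intros) auto
  qed
  have f_nonneg: "0 \<le> f (g x)" if "0 < x" "x < 1" for x
    unfolding f_def using kernel_cont(2)[OF a r, of "- g x"] gle[of x] that by simp
  have g'_nonneg: "0 \<le> g' x" if "0 \<le> x" "x \<le> 1" for x
  proof -
    have q: "1 - x * r > 0" using sr[of x] that by auto
    show ?thesis unfolding g'_def using that q r by simp
  qed
  have A: "((ereal \<circ> g \<circ> real_of_ereal) \<longlongrightarrow> -\<infinity>) (at_right (ereal 0))"
  proof -
    have "((\<lambda>s. ln (1 - r) - ln (1 - s * r)) \<longlongrightarrow> ln (1 - r) - ln (1 - 0 * r)) (at_right 0)"
      by (intro tendsto_intros) auto
    then have "LIM s at_right 0. (ln (1 - r) - ln (1 - s * r)) + ln s :> at_bot"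
      using filterlim_tendsto_add_at_bot_iff ln_at_0 by blast
    then have "LIM s at_right 0. g s :> at_bot"
      unfolding g_def by (simp add: algebra_simps)
    then show ?thesis by (simp add: ereal_tendsto_simps1 ereal_tendsto_simps2)
  qed
  have B: "((ereal \<circ> g \<circ> real_of_ereal) \<longlongrightarrow> ereal 0) (at_left (ereal 1))"
  proof -
    have "(g \<longlongrightarrow> ln 1 + ln (1 - r) - ln (1 - 1 * r)) (at_left 1)"
      unfolding g_def[abs_def] using r by (intro tendsto_intros) auto
    then have "(g \<longlongrightarrow> 0) (at_left 1)" by simp
    then show ?thesis by (simp add: ereal_tendsto_simps1 ereal_tendsto_simps2)
  qed
  have int01: "set_integrable lborel {0..1} (\<lambda>s. c * psi \<alpha> r s)"
    using psi_integrable[OF a r] by simp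
  have intfg: "set_integrable lborel (einterval (ereal 0) (ereal 1)) (\<lambda>x. f (g x) * g' x)"
  proof -
    have "set_integrable lborel {0<..<1} (\<lambda>s. c * psi \<alpha> r s)"
      by (rule set_integrable_subset[OF int01]) auto
    moreover have "set_integrable lborel {0<..<1} (\<lambda>x. f (g x) * g' x) =
        set_integrable lborel {0<..<1} (\<lambda>s. c * psi \<alpha> r s)"
      by (rule set_integrable_cong) (auto simp: fg)
    ultimately show ?thesis by simp
  qed
  have eq1: "(LBINT x=-\<infinity>..ereal 0. f x) = (LBINT x=ereal 0..ereal 1. f (g x) * g' x)"
  proof (rule interval_integral_substitution_nonneg(2))
    show "ereal 0 < ereal 1" by simp
    show "DERIV g x :> g' x" if "ereal 0 < ereal x" "ereal x < ereal 1" for x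
      using deriv that by simp
    show "isCont f (g x)" if "ereal 0 < ereal x" "ereal x < ereal 1" for x
      using contf that by simp
    show "isCont g' x" if "ereal 0 < ereal x" "ereal x < ereal 1" for x
      using contg' that by simp
    show "0 \<le> f (g x)" if "ereal 0 < ereal x" "ereal x < ereal 1" for x
      using f_nonneg that by simp
    show "0 \<le> g' x" if "ereal 0 \<le> ereal x" "ereal x \<le> ereal 1" for x
      using g'_nonneg that by simp
  qed (fact A B intfg)+
  have "(LBINT x=-\<infinity>..ereal 0. f x) = (LBINT x=ereal 0..\<infinity>. cesaro_kernel \<alpha> r x)"
    by (subst interval_integral_reflect) (simp add: f_def)
  also have "\<dots> = (LBINT x:{0<..}. cesaro_kernel \<alpha> r x)"
    by (rule interval_integral_to_infinity_eq)
  also have "\<dots> = (LBINT x:{0..}. cesaro_kernel \<alpha> r x)"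
    by (rule set_integral_discrete_difference[where X="{0}"]) auto
  finally have eq2: "(LBINT x=-\<infinity>..ereal 0. f x) = (LBINT x:{0..}. cesaro_kernel \<alpha> r x)" .
  have "(LBINT x=ereal 0..ereal 1. f (g x) * g' x) = (LBINT x=ereal 0..ereal 1. c * psi \<alpha> r x)"
    by (rule interval_integral_cong) (auto simp: fg)
  also have "\<dots> = c * (LBINT x=ereal 0..ereal 1. psi \<alpha> r x)" by simp
  also have "(LBINT x=ereal 0..ereal 1. psi \<alpha> r x) = integral {0..1} (\<lambda>s. psi \<alpha> r s)"
    using interval_integral_eq_integral[OF _ psi_integrable[OF a r]] by simp
  finally show ?thesis using eq1 eq2 c_def by simp
qed

lemma h_mono:
  fixes \<alpha> x y :: real
  assumes a: "0 < \<alpha>" and ab: "0 < x" "x \<le> y" "y \<le> 2"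
  shows "x powr \<alpha> * ln (2 * exp (1/\<alpha>) / x) \<le> y powr \<alpha> * ln (2 * exp (1/\<alpha>) / y)"
proof -
  define h where "h (u::real) = exp (\<alpha> * ln u) * (ln 2 + 1/\<alpha> - ln u)" for u
  have hx: "u powr \<alpha> * ln (2 * exp (1/\<alpha>) / u) = h u" if "u > 0" for u
    using that by (simp add: h_def powr_def ln_div ln_mult)
  have "h x \<le> h y"
  proof (rule DERIV_nonneg_imp_increasing_open[OF ab(2)])
    fix u assume u: "x < u" "u < y"
    then have u0: "u > 0" using ab by simp
    have d: "DERIV h u :> exp (\<alpha> * ln u) * (\<alpha> / u) * (ln 2 + 1/\<alpha> - ln u) + exp (\<alpha> * ln u) * (- (1 / u))"
      unfolding h_def using u0 by (auto intro!: derivative_eq_intros simp: field_simps)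
    have "ln u \<le> ln 2" using u ab u0 by simp
    then have "\<alpha> * (ln 2 + 1/\<alpha> - ln u) \<ge> 1" using a by (simp add: algebra_simps)
    moreover have "(\<alpha> / u) * (ln 2 + 1/\<alpha> - ln u) - 1 / u = (\<alpha> * (ln 2 + 1/\<alpha> - ln u) - 1) / u"
      using u0 by (simp add: diff_divide_distrib)
    ultimately have "(\<alpha> / u) * (ln 2 + 1/\<alpha> - ln u) - 1 / u \<ge> 0" using u0
      by simp
    then have "exp (\<alpha> * ln u) * ((\<alpha> / u) * (ln 2 + 1/\<alpha> - ln u) - 1 / u) \<ge> 0"
      by simp
    moreover have "exp (\<alpha> * ln u) * (\<alpha> / u) * (ln 2 + 1/\<alpha> - ln u) + exp (\<alpha> * ln u) * (- (1 / u))
       = exp (\<alpha> * ln u) * ((\<alpha> / u) * (ln 2 + 1/\<alpha> - ln u) - 1 / u)"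
      by (simp only: right_diff_distrib mult.assoc mult_minus_right diff_conv_add_uminus distrib_left)
    ultimately have "exp (\<alpha> * ln u) * (\<alpha> / u) * (ln 2 + 1/\<alpha> - ln u) + exp (\<alpha> * ln u) * (- (1 / u)) \<ge> 0"
      by simp
    with d show "\<exists>d. DERIV h u :> d \<and> d \<ge> 0" by blast
  next
    show "continuous_on {x..y} h" unfolding h_def using ab
      by (intro continuous_intros) auto
  qed
  then show ?thesis using hx ab by simp
qed


definition f0 :: "real \<Rightarrow> complex \<Rightarrow> complex" where
  "f0 \<alpha> z = exp (- (of_real \<alpha>) * Ln (1 - z\<^sup>2)) / Ln (of_real (2 * exp (1/\<alpha>)) / (1 - z\<^sup>2))"

lemma disc_facts:
  assumes "z \<in> unit_disc"
  shows "Re (1 - z\<^sup>2) > 0" "norm (1 - z\<^sup>2) < 2" "norm (1 - z\<^sup>2) \<ge> 1 - (cmod z)\<^sup>2"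
    "1 - (cmod z)\<^sup>2 > 0"
proof -
  have z: "cmod z < 1" using assms by (simp add: unit_disc_def)
  then have z2: "(cmod z)\<^sup>2 < 1" using sq_lt1[of "cmod z"] by simp
  have "Re (z\<^sup>2) \<le> cmod (z\<^sup>2)" by (rule complex_Re_le_cmod)
  then show "Re (1 - z\<^sup>2) > 0" using z2 by (simp add: norm_power)
  have "norm (1 - z\<^sup>2) \<le> norm (1::complex) + norm (z\<^sup>2)" by (rule norm_triangle_ineq4)
  then show "norm (1 - z\<^sup>2) < 2" using z2 by (simp add: norm_power)
  have "norm (1::complex) - norm (z\<^sup>2) \<le> norm (1 - z\<^sup>2)" by (rule norm_triangle_ineq2)
  then show "norm (1 - z\<^sup>2) \<ge> 1 - (cmod z)\<^sup>2" by (simp add: norm_power)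
  show "1 - (cmod z)\<^sup>2 > 0" using z2 by simp
qed

lemma f0_holo:
  assumes a: "0 < \<alpha>"
  shows "f0 \<alpha> holomorphic_on unit_disc"
proof -
  define c where "c = 2 * exp (1/\<alpha>)"
  have c: "c > 0" by (simp add: c_def)
  have ec: "c / 2 > 1" using a by (simp add: c_def)
  have w1: "1 - z\<^sup>2 \<notin> \<real>\<^sub>\<le>\<^sub>0" if "z \<in> unit_disc" for z
    using disc_facts(1)[OF that] by (auto simp: complex_nonpos_Reals_iff)
  have w2: "of_real c / (1 - z\<^sup>2) \<notin> \<real>\<^sub>\<le>\<^sub>0" if "z \<in> unit_disc" for z
  proof -
    have "Re (of_real c / (1 - z\<^sup>2)) = c * Re (1 - z\<^sup>2) / (norm (1 - z\<^sup>2))\<^sup>2"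
      by (simp add: Re_divide')
    moreover have "norm (1 - z\<^sup>2) > 0" using disc_facts(1)[OF that] by auto
    ultimately have "Re (of_real c / (1 - z\<^sup>2)) > 0" using disc_facts(1)[OF that] c by simp
    then show ?thesis by (auto simp: complex_nonpos_Reals_iff)
  qed
  have w3: "Ln (of_real c / (1 - z\<^sup>2)) \<noteq> 0" if "z \<in> unit_disc" for z
  proof -
    have n0: "norm (1 - z\<^sup>2) > 0" using disc_facts(1)[OF that] by auto
    have "norm (of_real c / (1 - z\<^sup>2)) = c / norm (1 - z\<^sup>2)" using c by (simp add: norm_divide)
    also have "\<dots> > c / 2" using divide_strict_left_mono[of "norm (1 - z\<^sup>2)" 2 c] disc_facts(2)[OF that] n0 c by simp
    finally have "norm (of_real c / (1 - z\<^sup>2)) > 1" using ec by simp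
    moreover have "of_real c / (1 - z\<^sup>2) \<noteq> 0" using n0 c by auto
    ultimately have "Re (Ln (of_real c / (1 - z\<^sup>2))) > 0" by simp
    then show ?thesis by auto
  qed
  have w0: "z\<^sup>2 \<noteq> 1" if "z \<in> unit_disc" for z
    using disc_facts(1)[OF that] by auto
  show ?thesis unfolding f0_def[abs_def] c_def[symmetric] using w0 w1 w2 w3
    by (intro holomorphic_intros) auto
qed


lemma f0_bound:
  assumes a: "0 < \<alpha>" and z: "z \<in> unit_disc"
  shows "(1 - (cmod z)\<^sup>2) powr \<alpha> * ln (2 * exp (1/\<alpha>) / (1 - (cmod z)\<^sup>2)) * cmod (f0 \<alpha> z) \<le> 1"
proof -
  define c where "c = 2 * exp (1/\<alpha>)"
  define w where "w = 1 - z\<^sup>2"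
  define W where "W = norm w"
  define A where "A = 1 - (cmod z)\<^sup>2"
  have c: "c > 0" by (simp add: c_def)
  have ec: "c / 2 > 1" using a by (simp add: c_def)
  have A: "A > 0" "A \<le> W" and W2: "W < 2" using disc_facts[OF z] by (auto simp: A_def W_def w_def)
  have W0: "W > 0" using A by simp
  have wne: "w \<noteq> 0" using W0 by (auto simp: W_def)
  have "c / W > c / 2" using divide_strict_left_mono[of W 2 c] W2 W0 c by simp
  then have cW: "c / W > 1" using ec by linarith
  define L where "L = ln (c / W)"
  have L: "L > 0" using cW by (simp add: L_def)
  have nL: "norm (Ln (of_real c / w)) \<ge> L"
  proof -
    have "of_real c / w \<noteq> 0" using wne c by simp
    then have "Re (Ln (of_real c / w)) = ln (norm (of_real c / w))" by simp
    also have "norm (of_real c / w) = c / W" using c by (simp add: norm_divide W_def)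
    finally have "Re (Ln (of_real c / w)) = L" by (simp add: L_def)
    then show ?thesis using complex_Re_le_cmod[of "Ln (of_real c / w)"] by simp
  qed
  have "norm (exp (- (of_real \<alpha>) * Ln w)) = exp (- \<alpha> * ln W)"
    using wne by (simp add: W_def)
  also have "exp (- \<alpha> * ln W) = 1 / W powr \<alpha>" using W0 by (simp add: powr_def exp_minus inverse_eq_divide)
  finally have ne: "norm (exp (- (of_real \<alpha>) * Ln w)) = 1 / W powr \<alpha>" .
  have "cmod (f0 \<alpha> z) = (1 / W powr \<alpha>) / norm (Ln (of_real c / w))"
    unfolding f0_def c_def[symmetric] w_def[symmetric] by (simp only: norm_divide ne)
  also have "\<dots> \<le> (1 / W powr \<alpha>) / L"
    using nL L W0 by (intro divide_left_mono) (auto intro!: mult_pos_pos)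
  finally have fb: "cmod (f0 \<alpha> z) \<le> 1 / (W powr \<alpha> * L)" by simp
  have hA: "A powr \<alpha> * ln (c / A) \<le> W powr \<alpha> * L"
    using h_mono[OF a A(1) A(2)] W2 by (simp add: c_def L_def)
  have hA0: "A powr \<alpha> * ln (c / A) \<ge> 0"
  proof -
    have "A \<le> 1" by (simp add: A_def)
    moreover have "c > 1" using ec by simp
    ultimately have "c / A \<ge> 1" using A(1) by (simp add: le_divide_eq)
    then show ?thesis by simp
  qed
  have "A powr \<alpha> * ln (c / A) * cmod (f0 \<alpha> z) \<le> (W powr \<alpha> * L) * (1 / (W powr \<alpha> * L))"
    using hA hA0 fb L by (rule_tac mult_mono) auto
  also have "\<dots> = 1" using W0 L by simp
  finally show ?thesis by (simp add: A_def c_def)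
qed

lemma f0_real:
  assumes a: "0 < \<alpha>" and y: "0 \<le> y" "y < 1"
  shows "f0 \<alpha> (of_real y) = of_real (1 / ((1 - y\<^sup>2) powr \<alpha> * ln (2 * exp (1/\<alpha>) / (1 - y\<^sup>2))))"
proof -
  have y2: "1 - y\<^sup>2 > 0" using sq_lt1[OF y] by simp
  have e1: "1 - (complex_of_real y)\<^sup>2 = of_real (1 - y\<^sup>2)" by simp
  have e2: "complex_of_real (2 * exp (1/\<alpha>)) / of_real (1 - y\<^sup>2) = of_real (2 * exp (1/\<alpha>) / (1 - y\<^sup>2))"
    by simp
  have p: "2 * exp (1/\<alpha>) / (1 - y\<^sup>2) > 0" using y2 by simp
  define L where "L = ln (2 * exp (1/\<alpha>) / (1 - y\<^sup>2))"
  have "f0 \<alpha> (of_real y) = exp (- (of_real \<alpha>) * Ln (of_real (1 - y\<^sup>2))) /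
      Ln (of_real (2 * exp (1/\<alpha>) / (1 - y\<^sup>2)))"
    by (simp only: f0_def e1 e2)
  also have "Ln (of_real (1 - y\<^sup>2)) = of_real (ln (1 - y\<^sup>2))" by (rule Ln_of_real) fact
  also have "Ln (of_real (2 * exp (1/\<alpha>) / (1 - y\<^sup>2))) = of_real L"
    unfolding L_def by (rule Ln_of_real) fact
  also have "exp (- (of_real \<alpha>) * of_real (ln (1 - y\<^sup>2))) = (of_real (exp (- \<alpha> * ln (1 - y\<^sup>2))) :: complex)"
    by (metis of_real_exp of_real_minus of_real_mult)
  also have "exp (- \<alpha> * ln (1 - y\<^sup>2)) = 1 / (1 - y\<^sup>2) powr \<alpha>"
    using y2 by (simp add: powr_def exp_minus inverse_eq_divide)
  finally show ?thesis by (simp add: L_def)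
qed

lemma log_norm_pt:
  assumes a: "0 < \<alpha>" and nf: "korenblum_log_norm \<alpha> f \<le> 1" and w: "w \<in> unit_disc"
  shows "cmod (f w) \<le> 1 / ((1 - (cmod w)\<^sup>2) powr \<alpha> * ln (2 * exp (1/\<alpha>) / (1 - (cmod w)\<^sup>2)))"
proof -
  have "ereal ((1 - (cmod w)\<^sup>2) powr \<alpha> * ln (2 * exp (1/\<alpha>) / (1 - (cmod w)\<^sup>2)) * cmod (f w))
      \<le> korenblum_log_norm \<alpha> f"
    unfolding korenblum_log_norm_def using w by (rule SUP_upper)
  also note nf
  finally have le1: "(1 - (cmod w)\<^sup>2) powr \<alpha> * ln (2 * exp (1/\<alpha>) / (1 - (cmod w)\<^sup>2)) * cmod (f w) \<le> 1"
    by (simp add: one_ereal_def)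
  have cw: "0 \<le> (cmod w)\<^sup>2" "(cmod w)\<^sup>2 < 1"
    using w sq_lt1[of "cmod w"] by (auto simp: unit_disc_def)
  have pos: "(1 - (cmod w)\<^sup>2) powr \<alpha> * ln (2 * exp (1/\<alpha>) / (1 - (cmod w)\<^sup>2)) > 0"
    using ln_weight_pos[OF a cw] cw by simp
  show ?thesis using le1 pos by (simp add: pos_le_divide_eq mult.commute)
qed

lemma upper_pt:
  assumes a: "0 < \<alpha>" and hf: "f holomorphic_on unit_disc" and nf: "korenblum_log_norm \<alpha> f \<le> 1"
    and z: "z \<in> unit_disc"
  shows "(1 - (cmod z)\<^sup>2) powr \<alpha> * cmod (cesaro f z)
     \<le> (1 - (cmod z)\<^sup>2) powr \<alpha> * integral {0..1} (psi \<alpha> (cmod z))"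
proof -
  define \<rho> where "\<rho> = cmod z"
  have \<rho>: "0 \<le> \<rho>" "\<rho> < 1" using z by (auto simp: unit_disc_def \<rho>_def)
  have nw: "cmod (of_real t * z) = t * \<rho>" if "t \<in> {0..1}" for t
    using that by (simp add: norm_mult \<rho>_def)
  have tr: "0 \<le> t * \<rho>" "t * \<rho> < 1" if "t \<in> {0..1}" for t
  proof -
    have "t * \<rho> \<le> \<rho>" using that \<rho> by (simp add: mult_left_le_one_le)
    then show "0 \<le> t * \<rho>" "t * \<rho> < 1" using that \<rho> by auto
  qed
  have inD: "of_real t * z \<in> unit_disc" if "t \<in> {0..1}" for t
    using nw[OF that] tr[OF that] by (simp add: unit_disc_def)
  have den: "1 - of_real t * z \<noteq> 0" if "t \<in> {0..1}" for t
  proof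
    assume "1 - of_real t * z = 0"
    then have "cmod (of_real t * z) = 1" by (metis eq_iff_diff_eq_0 norm_one)
    then show False using nw[OF that] tr[OF that] by simp
  qed
  have cont: "continuous_on {0..1} (\<lambda>t. f (of_real t * z) / (1 - of_real t * z))"
  proof (intro continuous_intros)
    show "continuous_on {0..1} (\<lambda>t. f (of_real t * z))"
      by (rule continuous_on_compose2[OF holomorphic_on_imp_continuous_on[OF hf]])
         (auto intro!: continuous_intros inD)
  qed (use den in auto)
  have int1: "(\<lambda>t. f (of_real t * z) / (1 - of_real t * z)) integrable_on {0..1}"
    by (rule integrable_continuous_interval[OF cont])
  have int2: "psi \<alpha> \<rho> integrable_on {0..1}"
    using set_borel_integral_eq_integral(1)[OF psi_integrable[OF a \<rho>]] .
  have bound: "norm (f (of_real t * z) / (1 - of_real t * z)) \<le> psi \<alpha> \<rho> t" if t: "t \<in> {0..1}" for t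
  proof -
    define w where "w = of_real t * z"
    have q: "1 - t * \<rho> > 0" using tr[OF t] by simp
    have "norm (1::complex) - norm w \<le> norm (1 - w)" by (rule norm_triangle_ineq2)
    then have n1: "1 - t * \<rho> \<le> norm (1 - w)" using nw[OF t] by (simp add: w_def)
    have fw: "cmod (f w) \<le> 1 / ((1 - (t * \<rho>)\<^sup>2) powr \<alpha> * ln (2 * exp (1/\<alpha>) / (1 - (t * \<rho>)\<^sup>2)))"
      using log_norm_pt[OF a nf inD[OF t]] nw[OF t] by (simp add: w_def)
    have "norm (f w / (1 - w)) = cmod (f w) / norm (1 - w)" by (simp add: norm_divide)
    also have "\<dots> \<le> cmod (f w) / (1 - t * \<rho>)"
      using n1 q by (intro divide_left_mono) (auto intro!: mult_pos_pos)
    also have "\<dots> \<le> (1 / ((1 - (t * \<rho>)\<^sup>2) powr \<alpha> * ln (2 * exp (1/\<alpha>) / (1 - (t * \<rho>)\<^sup>2)))) / (1 - t * \<rho>)"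
      using fw q by (intro divide_right_mono) auto
    also have "\<dots> = psi \<alpha> \<rho> t" by (simp add: psi_def)
    finally show ?thesis by (simp add: w_def)
  qed
  have "cmod (cesaro f z) \<le> integral {0..1} (psi \<alpha> \<rho>)"
    unfolding cesaro_def by (rule integral_norm_bound_integral[OF int1 int2 bound])
  then show ?thesis unfolding \<rho>_def[symmetric] by (rule mult_left_mono) simp
qed


lemma f0_in:
  assumes a: "0 < \<alpha>"
  shows "f0 \<alpha> \<in> {f. f holomorphic_on unit_disc \<and> korenblum_log_norm \<alpha> f \<le> 1}"
proof -
  have "korenblum_log_norm \<alpha> (f0 \<alpha>) \<le> 1"
    unfolding korenblum_log_norm_def
  proof (rule SUP_least)
    fix z assume "z \<in> unit_disc"
    then show "ereal ((1 - (cmod z)\<^sup>2) powr \<alpha> * ln (2 * exp (1/\<alpha>) / (1 - (cmod z)\<^sup>2)) * cmod (f0 \<alpha> z)) \<le> 1"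
      using f0_bound[OF a] by (simp add: one_ereal_def)
  qed
  then show ?thesis using f0_holo[OF a] by simp
qed

lemma lower_pt:
  assumes a: "0 < \<alpha>" and r: "0 \<le> r" "r < 1"
  shows "ereal ((1 - r\<^sup>2) powr \<alpha> * integral {0..1} (psi \<alpha> r)) \<le> cesaro_norm_log_to_korenblum \<alpha>"
proof -
  have int2: "psi \<alpha> r integrable_on {0..1}"
    using set_borel_integral_eq_integral(1)[OF psi_integrable[OF a r]] .
  have pt: "f0 \<alpha> (of_real t * of_real r) / (1 - of_real t * of_real r) = of_real (psi \<alpha> r t)"
    if t: "t \<in> {0..1}" for t
  proof -
    have tr: "0 \<le> t * r" "t * r < 1"
    proof -
      have "t * r \<le> r" using t r by (simp add: mult_left_le_one_le)
      then show "0 \<le> t * r" "t * r < 1" using t r by auto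
    qed
    have "f0 \<alpha> (of_real t * of_real r) / (1 - of_real t * of_real r)
        = f0 \<alpha> (of_real (t * r)) / of_real (1 - t * r)" by simp
    also have "\<dots> = of_real (1 / ((1 - (t * r)\<^sup>2) powr \<alpha> * ln (2 * exp (1/\<alpha>) / (1 - (t * r)\<^sup>2)))) / of_real (1 - t * r)"
      by (simp only: f0_real[OF a tr])
    also have "\<dots> = of_real (psi \<alpha> r t)" by (simp add: psi_def)
    finally show ?thesis .
  qed
  have "cesaro (f0 \<alpha>) (of_real r) = integral {0..1} (\<lambda>t. complex_of_real (psi \<alpha> r t))"
    unfolding cesaro_def by (rule integral_cong) (use pt in auto)
  also have "\<dots> = of_real (integral {0..1} (psi \<alpha> r))"
    by (rule integral_unique[OF has_integral_of_real[OF integrable_integral[OF int2]]])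
  finally have ces: "cesaro (f0 \<alpha>) (of_real r) = of_real (integral {0..1} (psi \<alpha> r))" .
  have nn: "integral {0..1} (psi \<alpha> r) \<ge> 0"
    using int2 psi_pos[OF a r] by (intro integral_nonneg) (auto intro: less_imp_le)
  have zr: "complex_of_real r \<in> unit_disc" using r by (simp add: unit_disc_def)
  have "ereal ((1 - r\<^sup>2) powr \<alpha> * integral {0..1} (psi \<alpha> r))
      = ereal ((1 - (cmod (complex_of_real r))\<^sup>2) powr \<alpha> * cmod (cesaro (f0 \<alpha>) (of_real r)))"
    using ces nn r by simp
  also have "\<dots> \<le> korenblum_norm \<alpha> (cesaro (f0 \<alpha>))"
    unfolding korenblum_norm_def using zr by (rule SUP_upper)
  also have "\<dots> \<le> cesaro_norm_log_to_korenblum \<alpha>"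
    unfolding cesaro_norm_log_to_korenblum_def using f0_in[OF a] by (rule SUP_upper)
  finally show ?thesis .
qed

theorem theorem4p1:
  fixes \<alpha> :: real
  assumes "0 < \<alpha>" and "\<alpha> < 1"
  shows "cesaro_norm_log_to_korenblum \<alpha>
           = (SUP r\<in>{0..<1}. ereal (LBINT t:{0..}. cesaro_kernel \<alpha> r t))
         \<and> cesaro_norm_log_to_korenblum \<alpha> \<ge> ereal (1 / (1/\<alpha> + ln 2))"
proof -
  note a = assms(1)
  define K where "K r = (1 - r\<^sup>2) powr \<alpha> * integral {0..1} (psi \<alpha> r)" for r
  have RHS: "(SUP r\<in>{0..<1}. ereal (LBINT t:{0..}. cesaro_kernel \<alpha> r t)) = (SUP r\<in>{0..<1}. ereal (K r))"
    by (rule SUP_cong) (auto simp: K_def kernel_integral[OF a])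
  have le: "cesaro_norm_log_to_korenblum \<alpha> \<le> (SUP r\<in>{0..<1}. ereal (K r))"
    unfolding cesaro_norm_log_to_korenblum_def
  proof (rule SUP_least)
    fix f assume f: "f \<in> {f. f holomorphic_on unit_disc \<and> korenblum_log_norm \<alpha> f \<le> 1}"
    show "korenblum_norm \<alpha> (cesaro f) \<le> (SUP r\<in>{0..<1}. ereal (K r))"
      unfolding korenblum_norm_def
    proof (rule SUP_least)
      fix z assume z: "z \<in> unit_disc"
      have zr: "cmod z \<in> {0..<1}" using z by (simp add: unit_disc_def)
      have "ereal ((1 - (cmod z)\<^sup>2) powr \<alpha> * cmod (cesaro f z)) \<le> ereal (K (cmod z))"
        using upper_pt[OF a _ _ z] f by (simp add: K_def)
      also have "\<dots> \<le> (SUP r\<in>{0..<1}. ereal (K r))" using zr by (rule SUP_upper)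
      finally show "ereal ((1 - (cmod z)\<^sup>2) powr \<alpha> * cmod (cesaro f z)) \<le> (SUP r\<in>{0..<1}. ereal (K r))" .
    qed
  qed
  have ge: "(SUP r\<in>{0..<1}. ereal (K r)) \<le> cesaro_norm_log_to_korenblum \<alpha>"
  proof (rule SUP_least)
    fix r :: real assume "r \<in> {0..<1}"
    then show "ereal (K r) \<le> cesaro_norm_log_to_korenblum \<alpha>"
      using lower_pt[OF a] by (simp add: K_def)
  qed
  have eq: "cesaro_norm_log_to_korenblum \<alpha> = (SUP r\<in>{0..<1}. ereal (K r))"
    using le ge by (rule antisym)
  have "psi \<alpha> 0 = (\<lambda>s. 1 / (1/\<alpha> + ln 2))"
    by (rule ext) (simp add: psi_def ln_mult add.commute)
  then have K0: "K 0 = 1 / (1/\<alpha> + ln 2)" by (simp add: K_def)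
  have "ereal (K 0) \<le> (SUP r\<in>{0..<1}. ereal (K r))" by (rule SUP_upper) simp
  then show ?thesis using eq RHS K0 by simp
qed

end
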